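(* For every strictly positive formula $A$ and every $\alpha\le\omega$, $A\nvdash_{\mathbf{RC\omega}}\alpha A$.
   Context: Strictly positive formulas: $A::= p\mid \top\mid (A\land B)\mid \alpha A$, $\alpha\le\omega$. $\mathbf{RC\omega}$: $A\vdash A$; $A\vdash\top$; cut; $A\land B\vdash A$; $A\land B\vdash B$; from $A\vdash B$, $A\vdash C$ infer $A\vdash B\land C$; from $A\vdash B$ infer $\alpha A\vdash\alpha B$; $\alpha\alpha A\vdash\alpha A$; $\alpha\beta A\vdash\beta A$, $\beta\alpha A\vdash\beta A$ for $\alpha\ge\beta$; $\alpha A\land\beta B\vdash\alpha(A\land\beta B)$ for $\alpha>\beta$; $\alpha A\vdash\beta A$ for $\alpha>\beta$; $\omega A\vdash A$. *)

theory Defs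
  imports Main "HOL-Library.Extended_Nat"
begin

text \<open>Modality indices alpha \<le> omega are represented by extended naturals (enat), where
  \<infinity> plays the role of omega.\<close>

datatype fm = Var nat | Top | Conj fm fm | Dia enat fm

inductive RCw :: "fm \<Rightarrow> fm \<Rightarrow> bool" (infix "\<turnstile>\<^sub>R" 50) where
  refl: "A \<turnstile>\<^sub>R A"
| top: "A \<turnstile>\<^sub>R Top"
| cut: "A \<turnstile>\<^sub>R B \<Longrightarrow> B \<turnstile>\<^sub>R C \<Longrightarrow> A \<turnstile>\<^sub>R C"
| conjE1: "Conj A B \<turnstile>\<^sub>R A"
| conjE2: "Conj A B \<turnstile>\<^sub>R B"
| conjI: "A \<turnstile>\<^sub>R B \<Longrightarrow> A \<turnstile>\<^sub>R C \<Longrightarrow> A \<turnstile>\<^sub>R Conj B C"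
| nec: "A \<turnstile>\<^sub>R B \<Longrightarrow> Dia a A \<turnstile>\<^sub>R Dia a B"
| trans4: "Dia a (Dia a A) \<turnstile>\<^sub>R Dia a A"
| mono1: "a \<ge> b \<Longrightarrow> Dia a (Dia b A) \<turnstile>\<^sub>R Dia b A"
| mono2: "a \<ge> b \<Longrightarrow> Dia b (Dia a A) \<turnstile>\<^sub>R Dia b A"
| J: "a > b \<Longrightarrow> Conj (Dia a A) (Dia b B) \<turnstile>\<^sub>R Dia a (Conj A (Dia b B))"
| mono: "a > b \<Longrightarrow> Dia a A \<turnstile>\<^sub>R Dia b A"
| omega: "Dia \<infinity> A \<turnstile>\<^sub>R A"

end

theory Submission
  imports Defs
begin


datatype ord = Z | C ord ord

fun olt :: "ord \<Rightarrow> ord \<Rightarrow> bool" where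
  "olt Z Z = False"
| "olt Z (C _ _) = True"
| "olt (C _ _) Z = False"
| "olt (C a b) (C c d) = (olt a c \<or> (a = c \<and> olt b d))"

definition ole :: "ord \<Rightarrow> ord \<Rightarrow> bool" where "ole x y = (olt x y \<or> x = y)"

fun nf :: "ord \<Rightarrow> bool" where
  "nf Z = True"
| "nf (C a b) = (nf a \<and> nf b \<and> (case b of Z \<Rightarrow> True | C c d \<Rightarrow> ole c a))"

fun addw :: "ord \<Rightarrow> ord \<Rightarrow> ord" where
  "addw Z d = C d Z"
| "addw (C a b) d = (if olt a d then C d Z else C a (addw b d))"

fun align :: "ord \<Rightarrow> ord \<Rightarrow> bool" where
  "align d Z = True"
| "align d (C a b) = (if b = Z then ole d a else align d b)"

definition omax :: "ord \<Rightarrow> ord \<Rightarrow> ord" where "omax x y = (if olt x y then y else x)"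

lemma olt_irrefl[simp]: "\<not> olt x x"
  by (induction x) auto

lemma olt_trans: "olt x y \<Longrightarrow> olt y z \<Longrightarrow> olt x z"
proof (induction x arbitrary: y z)
  case Z then show ?case by (cases z) (auto elim: olt.elims)
next
  case (C a b)
  then show ?case
    by (cases y; cases z) auto
qed

lemma olt_lin: "olt x y \<or> x = y \<or> olt y x"
proof (induction x arbitrary: y)
  case Z then show ?case by (cases y) auto
next
  case (C a b)
  show ?case
  proof (cases y)
    case Z then show ?thesis by simp
  next
    case (C c d) then show ?thesis using C.IH(1)[of c] C.IH(2)[of d] by auto
  qed
qed

lemma olt_Z[simp]: "\<not> olt x Z" by (cases x) auto

lemma ole_trans: "ole x y \<Longrightarrow> ole y z \<Longrightarrow> ole x z"
  unfolding ole_def using olt_trans by blast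
lemma olt_ole_trans: "olt x y \<Longrightarrow> ole y z \<Longrightarrow> olt x z"
  unfolding ole_def using olt_trans by blast
lemma ole_olt_trans: "ole x y \<Longrightarrow> olt y z \<Longrightarrow> olt x z"
  unfolding ole_def using olt_trans by blast
lemma not_olt_ole: "\<not> olt x y \<Longrightarrow> ole y x"
  unfolding ole_def using olt_lin by blast

lemma lt_tail: "nf (C c d) \<Longrightarrow> olt d (C c d)"
proof (induction d arbitrary: c)
  case Z then show ?case by simp
next
  case (C e f)
  then show ?case by (auto simp: ole_def)
qed

definition rel :: "ord \<Rightarrow> ord \<Rightarrow> bool" where "rel y x = (nf y \<and> olt y x)"

lemma relD: "rel y x \<Longrightarrow> nf y \<and> olt y x" by (simp add: rel_def)
lemma relI: "nf y \<Longrightarrow> olt y x \<Longrightarrow> rel y x" by (simp add: rel_def)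

lemma acc_Z: "Wellfounded.accp rel Z"
  by (rule accp.accI) (simp add: rel_def)

lemma accQ:
  assumes "Wellfounded.accp rel a"
  shows "\<And>b. Wellfounded.accp rel b \<Longrightarrow> nf (C a b) \<Longrightarrow> Wellfounded.accp rel (C a b)"
  using assms
proof (induction a rule: accp.induct)
  case (accI a)
  note outer = accI.IH
  show ?case using accI.prems
  proof (induction b rule: accp.induct)
    case (accI b)
    note inner = accI.IH
    have "\<And>y. nf y \<Longrightarrow> olt y (C a b) \<Longrightarrow> Wellfounded.accp rel y"
    proof -
      fix y show "nf y \<Longrightarrow> olt y (C a b) \<Longrightarrow> Wellfounded.accp rel y"
      proof (induction y)
        case Z then show ?case using acc_Z by blast
      next
        case (C c d)
        have nfd: "nf d" "nf c" using C.prems by auto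
        have "olt d (C c d)" using lt_tail C.prems(1) by blast
        hence "olt d (C a b)" using C.prems(2) olt_trans by blast
        hence accd: "Wellfounded.accp rel d" using C.IH(2) nfd by blast
        show ?case
        proof (cases "olt c a")
          case True
          have rca: "rel c a" using True nfd by (simp add: relI)
          show ?thesis using outer[OF rca] accd C.prems(1) by simp
        next
          case False
          hence "c = a" "olt d b" using C.prems(2) by auto
          moreover have "rel d b" using \<open>olt d b\<close> nfd by (simp add: relI)
          ultimately show ?thesis using inner[of d] C.prems(1) by simp
        qed
      qed
    qed
    note * = this
    show ?case by (rule accp.accI) (use * relD in blast)
  qed
qed

lemma acc_all: "nf x \<Longrightarrow> Wellfounded.accp rel x"
proof (induction x)
  case Z then show ?case using acc_Z by blast
next
  case (C a b) then show ?case using accQ by auto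
qed

lemma ord_min:
  assumes "x \<in> S" "\<forall>y\<in>S. nf y"
  shows "\<exists>m\<in>S. \<forall>y\<in>S. \<not> olt y m"
proof -
  have "Wellfounded.accp rel x" using acc_all assms by blast
  then show ?thesis using assms
  proof (induction x rule: accp.induct)
    case (accI x)
    then show ?case by (metis relI)
  qed
qed

lemma addw_gt: "olt x (addw x d)"
  by (induction x) auto

lemma addw_ne: "addw x d \<noteq> Z"
  by (cases x) auto

lemma align_addw: "align d (addw x d)"
  by (induction x) (auto simp: ole_def addw_ne)

lemma lead_addw: "addw b d = C c e \<Longrightarrow> c = d \<or> (\<exists>f. b = C c f)"
  by (cases b) (auto split: if_splits)

lemma nf_addw: "nf x \<Longrightarrow> nf d \<Longrightarrow> nf (addw x d)"
proof (induction x)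
  case Z then show ?case by simp
next
  case (C a b)
  show ?case
  proof (cases "olt a d")
    case True then show ?thesis using C by simp
  next
    case False
    have "nf (addw b d)" using C by simp
    moreover have "case addw b d of Z \<Rightarrow> True | C c e \<Rightarrow> ole c a"
    proof (cases "addw b d")
      case Z then show ?thesis by simp
    next
      case (C c e)
      from lead_addw[OF this] show ?thesis
        using C False C.prems not_olt_ole by (auto)
    qed
    ultimately show ?thesis using False C.prems by simp
  qed
qed

lemma align_lead: "nf (C e f) \<Longrightarrow> align d (C e f) \<Longrightarrow> ole d e"
proof (induction f arbitrary: e)
  case Z then show ?case by simp
next
  case (C g h)
  have "nf (C g h)" "ole g e" using C.prems by auto
  moreover have "align d (C g h)" using C.prems by simp
  ultimately have "ole d g" using C.IH(2)[of g] by simp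
  then show ?case using ole_trans \<open>ole g e\<close> by blast
qed

lemma gap: "nf x \<Longrightarrow> nf a \<Longrightarrow> olt x a \<Longrightarrow> olt d d' \<Longrightarrow> align d' a \<Longrightarrow> olt (addw x d) a"
proof (induction x arbitrary: a)
  case Z
  then obtain e f where a: "a = C e f" by (cases a) auto
  have "ole d' e" using align_lead Z a by blast
  then show ?case using a Z olt_ole_trans by auto
next
  case (C c g)
  then obtain e f where a: "a = C e f" by (cases a) auto
  have de: "olt d e" using align_lead C a olt_ole_trans by blast
  show ?case
  proof (cases "olt c d")
    case True then show ?thesis using a de by simp
  next
    case False
    show ?thesis
    proof (cases "olt c e")
      case True then show ?thesis using a False by simp
    next
      case ce: False
      hence "c = e" "olt g f" using C.prems a by auto
      hence "f \<noteq> Z" by auto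
      hence "align d' f" using C.prems a by simp
      hence "olt (addw g d) f" using C.IH[of f] C.prems a \<open>olt g f\<close> by auto
      then show ?thesis using a False \<open>c = e\<close> by simp
    qed
  qed
qed

lemma omax_ge1: "ole x (omax x y)" and omax_ge2: "ole y (omax x y)"
  unfolding omax_def ole_def using olt_lin by auto
lemma nf_omax: "nf x \<Longrightarrow> nf y \<Longrightarrow> nf (omax x y)"
  unfolding omax_def by simp



function F :: "nat \<Rightarrow> (nat \<Rightarrow> ord) \<Rightarrow> (nat \<Rightarrow> ord) \<Rightarrow> nat \<Rightarrow> ord" where
  "F n f g k = (if n < k then g k else addw (f k) (F n f g (Suc k)))"
  by auto
termination by (relation "measure (\<lambda>(n,f,g,k). Suc n - k)") auto

declare F.simps[simp del]

lemma F_gt: "n < k \<Longrightarrow> F n f g k = g k"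
  by (simp add: F.simps)
lemma F_le: "k \<le> n \<Longrightarrow> F n f g k = addw (f k) (F n f g (Suc k))"
  by (subst F.simps) simp

lemma F_nf: "(\<forall>k. nf (f k)) \<Longrightarrow> (\<forall>k. nf (g k)) \<Longrightarrow> nf (F n f g k)"
proof (induction n f g k rule: F.induct)
  case (1 n f g k)
  then show ?case
    by (cases "n < k") (auto simp: F_gt F_le intro: nf_addw)
qed

definition W :: "nat \<Rightarrow> (nat \<Rightarrow> ord) set" where
  "W N = {v. (\<forall>k. nf (v k)) \<and> (\<forall>k<N. align (v (Suc k)) (v k))}"

definition leN :: "nat \<Rightarrow> (nat \<Rightarrow> ord) \<Rightarrow> (nat \<Rightarrow> ord) \<Rightarrow> bool" where
  "leN N v w = (\<forall>k\<le>N. ole (v k) (w k))"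

lemma F_W:
  assumes "\<forall>k. nf (f k)" "g \<in> W N"
  shows "F n f g \<in> W N"
proof -
  have "\<forall>k. nf (F n f g k)" using assms F_nf unfolding W_def by blast
  moreover have "align (F n f g (Suc k)) (F n f g k)" if "k < N" for k
  proof (cases "n < k")
    case True then show ?thesis using assms that by (simp add: F_gt W_def)
  next
    case False then show ?thesis by (simp add: F_le align_addw)
  qed
  ultimately show ?thesis unfolding W_def by blast
qed

lemma F_gt_f: "k \<le> n \<Longrightarrow> olt (f k) (F n f g k)"
  by (simp add: F_le addw_gt)

lemma zero_W: "(\<lambda>_. Z) \<in> W N"
  by (simp add: W_def)

definition dia :: "nat \<Rightarrow> nat \<Rightarrow> (nat \<Rightarrow> ord) set \<Rightarrow> (nat \<Rightarrow> ord) set" where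
  "dia N n X = (if n \<le> N then {w \<in> W N. \<exists>v\<in>X. \<forall>k\<le>n. olt (v k) (w k)} else {})"

fun sem :: "nat \<Rightarrow> fm \<Rightarrow> (nat \<Rightarrow> ord) set" where
  "sem N (Var p) = W N"
| "sem N Top = W N"
| "sem N (Conj A B) = sem N A \<inter> sem N B"
| "sem N (Dia a A) = (case a of enat n \<Rightarrow> dia N n (sem N A)
                        | \<infinity> \<Rightarrow> sem N A \<inter> dia N N (sem N A))"

lemma diaI: "n \<le> N \<Longrightarrow> w \<in> W N \<Longrightarrow> v \<in> X \<Longrightarrow> \<forall>k\<le>n. olt (v k) (w k) \<Longrightarrow> w \<in> dia N n X"
  unfolding dia_def by auto

lemma dia_W: "dia N n X \<subseteq> W N" by (auto simp: dia_def)

lemma sem_W: "sem N A \<subseteq> W N"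
  by (induction A) (auto simp: dia_def split: enat.splits)

lemma dia_mono: "X \<subseteq> Y \<Longrightarrow> dia N n X \<subseteq> dia N n Y"
  by (auto simp: dia_def)

lemma dia_up: "w \<in> dia N n X \<Longrightarrow> w' \<in> W N \<Longrightarrow> leN N w w' \<Longrightarrow> w' \<in> dia N n X"
  unfolding dia_def leN_def
  apply (auto split: if_splits)
  by (meson le_trans olt_ole_trans)

lemma dia_Int1: "dia N n (X \<inter> Y) \<subseteq> dia N n X"
  by (rule dia_mono) blast

lemma sem_up: "w \<in> sem N A \<Longrightarrow> w' \<in> W N \<Longrightarrow> leN N w w' \<Longrightarrow> w' \<in> sem N A"
  by (induction A) (auto intro: dia_up split: enat.splits)

lemma dia_trans: "m \<le> n \<Longrightarrow> dia N m (dia N n X) \<subseteq> dia N m X"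
  unfolding dia_def using olt_trans by (auto split: if_splits) (meson le_trans order_refl)

lemma dia_trans2: "m \<le> n \<Longrightarrow> dia N n (dia N m X) \<subseteq> dia N m X"
  unfolding dia_def using olt_trans by (auto split: if_splits) (meson le_trans order_refl)

lemma dia_anti: "m \<le> n \<Longrightarrow> dia N n X \<subseteq> dia N m X"
  unfolding dia_def apply (auto split: if_splits)
  by (meson le_trans)

lemma omax_lt: "olt x z \<Longrightarrow> olt y z \<Longrightarrow> olt (omax x y) z"
  by (simp add: omax_def)

lemma dia_J:
  assumes "n < m" and XW: "X \<subseteq> W N" and YW: "Y \<subseteq> W N"
    and up: "\<And>w w'. w \<in> X \<Longrightarrow> w' \<in> W N \<Longrightarrow> leN N w w' \<Longrightarrow> w' \<in> X"
  shows "dia N m X \<inter> dia N n Y \<subseteq> dia N m (X \<inter> dia N n Y)"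
proof
  fix w assume w: "w \<in> dia N m X \<inter> dia N n Y"
  hence mN: "m \<le> N" by (auto simp: dia_def split: if_splits)
  from w obtain v u where wW: "w \<in> W N" and v: "v \<in> X" "\<forall>k\<le>m. olt (v k) (w k)"
    and u: "u \<in> Y" "\<forall>k\<le>n. olt (u k) (w k)"
    by (auto simp: dia_def split: if_splits)
  have vW: "v \<in> W N" and uW: "u \<in> W N" using v u XW YW by auto
  define G where "G = F n (\<lambda>k. omax (v k) (u k)) v"
  have nfs: "\<forall>k. nf (omax (v k) (u k))" using vW uW by (auto simp: W_def intro: nf_omax)
  have GW: "G \<in> W N" unfolding G_def using F_W[OF nfs vW] .
  have leG: "leN N v G" unfolding leN_def
  proof (intro allI impI)
    fix k assume "k \<le> N"
    show "ole (v k) (G k)"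
    proof (cases "n < k")
      case True then show ?thesis by (simp add: G_def F_gt ole_def)
    next
      case False
      hence "olt (omax (v k) (u k)) (G k)" unfolding G_def by (intro F_gt_f) simp
      then show ?thesis using omax_ge1 ole_olt_trans ole_def by blast
    qed
  qed
  have GX: "G \<in> X" using up[OF v(1) GW leG] .
  have uG: "\<forall>k\<le>n. olt (u k) (G k)"
  proof (intro allI impI)
    fix k assume "k \<le> n"
    hence "olt (omax (v k) (u k)) (G k)" unfolding G_def by (intro F_gt_f)
    then show "olt (u k) (G k)" using omax_ge2 ole_olt_trans by blast
  qed
  have Gw: "olt (G k) (w k)" if "k \<le> m" for k
    using that
  proof (induction k rule: inc_induct)
    case base
    then show ?case using \<open>n < m\<close> v(2) by (simp add: G_def F_gt)
  next
    case (step k)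
    show ?case
    proof (cases "n < k")
      case True then show ?thesis using v(2) step by (simp add: G_def F_gt)
    next
      case False
      hence Gk: "G k = addw (omax (v k) (u k)) (G (Suc k))" by (simp add: G_def F_le)
      have "olt (omax (v k) (u k)) (w k)" using False v(2) u(2) step by (intro omax_lt) auto
      moreover have "nf (omax (v k) (u k))" using nfs by blast
      moreover have "nf (w k)" using wW by (simp add: W_def)
      moreover have "align (w (Suc k)) (w k)" using wW step mN by (simp add: W_def)
      ultimately show ?thesis using gap step.IH Gk by simp
    qed
  qed
  have "G \<in> dia N n Y" using GW u(1) uG \<open>n < m\<close> mN by (auto simp: dia_def)
  hence "G \<in> X \<inter> dia N n Y" using GX by blast
  then show "w \<in> dia N m (X \<inter> dia N n Y)" using diaI[OF mN wW] Gw by blast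
qed

lemma sem_up': "w \<in> sem N A \<Longrightarrow> w' \<in> W N \<Longrightarrow> leN N w w' \<Longrightarrow> w' \<in> sem N A"
  by (rule sem_up)

lemma sound: "A \<turnstile>\<^sub>R B \<Longrightarrow> \<exists>N0. \<forall>N\<ge>N0. sem N A \<subseteq> sem N B"
proof (induction rule: RCw.induct)
  case (refl A) then show ?case by auto
next
  case (top A) then show ?case using sem_W by auto
next
  case (cut A B C)
  then obtain N1 N2 where "\<forall>N\<ge>N1. sem N A \<subseteq> sem N B" "\<forall>N\<ge>N2. sem N B \<subseteq> sem N C" by blast
  then show ?case by (intro exI[of _ "max N1 N2"]) fastforce
next
  case (conjE1 A B) then show ?case by auto
next
  case (conjE2 A B) then show ?case by auto
next
  case (conjI A B C)
  then obtain N1 N2 where "\<forall>N\<ge>N1. sem N A \<subseteq> sem N B" "\<forall>N\<ge>N2. sem N A \<subseteq> sem N C" by blast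
  then show ?case by (intro exI[of _ "max N1 N2"]) fastforce
next
  case (nec A B a)
  then obtain N1 where N1: "\<forall>N\<ge>N1. sem N A \<subseteq> sem N B" by blast
  show ?case
  proof (intro exI[of _ N1] allI impI)
    fix N assume "N \<ge> N1"
    hence "sem N A \<subseteq> sem N B" using N1 by blast
    then show "sem N (Dia a A) \<subseteq> sem N (Dia a B)"
      using dia_mono[of "sem N A" "sem N B" N] by (cases a) auto
  qed
next
  case (trans4 a A)
  show ?case
  proof (cases a)
    case (enat n) then show ?thesis using dia_trans[of n n] by auto
  next
    case infinity then show ?thesis by auto
  qed
next
  case (mono1 x y A)
  show ?case
  proof (cases x; cases y)
    fix n m assume "x = enat n" "y = enat m"
    then show ?case using mono1 dia_trans2[of n m] dia_trans2[of m n] by auto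
  next
    fix n assume "x = enat n" "y = \<infinity>"
    then show ?case using mono1 by auto
  next
    fix n assume "x = \<infinity>" "y = enat n"
    then show ?case using mono1 by auto
  next
    assume "x = \<infinity>" "y = \<infinity>"
    then show ?case using mono1 by auto
  qed
next
  case (mono2 x y A)
  show ?case
  proof (cases x; cases y)
    fix n m assume "x = enat n" "y = enat m"
    then show ?case using mono2 dia_trans[of n m] dia_trans[of m n] by auto
  next
    fix n assume "x = enat n" "y = \<infinity>"
    then show ?case using mono2 dia_Int1 by auto
  next
    fix n assume "x = \<infinity>" "y = enat n"
    then show ?case using mono2 dia_Int1 by auto
  next
    assume "x = \<infinity>" "y = \<infinity>"
    then show ?case using mono2 by auto
  qed
next
  case (J b a A B)
  then obtain n where bn: "a = enat n" by (cases a) auto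
  show ?case
  proof (cases b)
    case (enat m)
    hence "n < m" using J bn by auto
    show ?thesis
    proof (intro exI[of _ 0] allI impI)
      fix N :: nat
      have "dia N m (sem N A) \<inter> dia N n (sem N B) \<subseteq> dia N m (sem N A \<inter> dia N n (sem N B))"
        by (rule dia_J[OF \<open>n < m\<close> sem_W sem_W sem_up])
      then show "sem N (Conj (Dia b A) (Dia a B)) \<subseteq> sem N (Dia b (Conj A (Dia a B)))"
        using enat bn by simp
    qed
  next
    case infinity
    show ?thesis
    proof (intro exI[of _ "Suc n"] allI impI)
      fix N assume "Suc n \<le> N"
      hence "n < N" by simp
      have "dia N N (sem N A) \<inter> dia N n (sem N B) \<subseteq> dia N N (sem N A \<inter> dia N n (sem N B))"
        by (rule dia_J[OF \<open>n < N\<close> sem_W sem_W sem_up])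
      then show "sem N (Conj (Dia b A) (Dia a B)) \<subseteq> sem N (Dia b (Conj A (Dia a B)))"
        using infinity bn by auto
    qed
  qed
next
  case (mono b a A)
  then obtain n where bn: "a = enat n" by (cases a) auto
  show ?case
  proof (cases b)
    case (enat m)
    hence "n < m" using mono bn by auto
    then show ?thesis using bn enat dia_anti[of n m] by auto
  next
    case infinity
    show ?thesis
      using infinity bn dia_anti[of n] by (intro exI[of _ n]) auto
  qed
next
  case (omega A) then show ?case by auto
qed


fun maxi :: "fm \<Rightarrow> nat" where
  "maxi (Var p) = 0"
| "maxi Top = 0"
| "maxi (Conj A B) = max (maxi A) (maxi B)"
| "maxi (Dia a A) = (case a of enat n \<Rightarrow> max n (maxi A) | \<infinity> \<Rightarrow> maxi A)"

lemma nonempty: "maxi A \<le> N \<Longrightarrow> \<exists>w. w \<in> sem N A"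
proof (induction A)
  case (Var p) then show ?case using zero_W by auto
next
  case Top then show ?case using zero_W by auto
next
  case (Conj A B)
  then obtain v u where v: "v \<in> sem N A" and u: "u \<in> sem N B" by auto
  have vW: "v \<in> W N" and uW: "u \<in> W N" using v u sem_W by auto
  define U where "U = F N (\<lambda>k. omax (v k) (u k)) (\<lambda>_. Z)"
  have nfs: "\<forall>k. nf (omax (v k) (u k))" using vW uW by (auto simp: W_def intro: nf_omax)
  have UW: "U \<in> W N" unfolding U_def using F_W[OF nfs zero_W] .
  have l1: "leN N v U" unfolding leN_def
  proof (intro allI impI)
    fix k assume "k \<le> N"
    hence *: "olt (omax (v k) (u k)) (U k)" unfolding U_def by (intro F_gt_f)
    show "ole (v k) (U k)" using * omax_ge1 ole_olt_trans ole_def by blast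
  qed
  have l2: "leN N u U" unfolding leN_def
  proof (intro allI impI)
    fix k assume "k \<le> N"
    hence *: "olt (omax (v k) (u k)) (U k)" unfolding U_def by (intro F_gt_f)
    show "ole (u k) (U k)" using * omax_ge2 ole_olt_trans ole_def by blast
  qed
  note l1 l2
  then show ?case using sem_up[OF v UW] sem_up[OF u UW] by auto
next
  case (Dia a B)
  then obtain v where v: "v \<in> sem N B" by (cases a) auto
  have vW: "v \<in> W N" using v sem_W by auto
  have nfv: "\<forall>k. nf (v k)" using vW by (simp add: W_def)
  show ?case
  proof (cases a)
    case (enat n)
    hence nN: "n \<le> N" using Dia.prems by simp
    define S where "S = F n v v"
    have SW: "S \<in> W N" unfolding S_def using F_W[OF nfv vW] .
    have "\<forall>k\<le>n. olt (v k) (S k)" unfolding S_def using F_gt_f by blast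
    hence "S \<in> dia N n (sem N B)" using diaI[OF nN SW v] by blast
    then show ?thesis using enat by auto
  next
    case infinity
    define S where "S = F N v v"
    have SW: "S \<in> W N" unfolding S_def using F_W[OF nfv vW] .
    have lt: "\<forall>k\<le>N. olt (v k) (S k)" unfolding S_def using F_gt_f by blast
    hence "leN N v S" by (simp add: leN_def ole_def)
    hence "S \<in> sem N B" using sem_up[OF v SW] by blast
    moreover have "S \<in> dia N N (sem N B)" using diaI[OF le_refl SW v] lt by blast
    ultimately show ?thesis using infinity by auto
  qed
qed

theorem lemma6p1:
  fixes A :: fm and a :: enat
  shows "\<not> (A \<turnstile>\<^sub>R Dia a A)"
proof
  assume h: "A \<turnstile>\<^sub>R Dia a A"
  have h0: "A \<turnstile>\<^sub>R Dia (enat 0) A"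
  proof (cases "a = enat 0")
    case True then show ?thesis using h by simp
  next
    case False
    hence "enat 0 < a" by (simp add: zero_enat_def[symmetric])
    then show ?thesis using RCw.cut[OF h RCw.mono] by blast
  qed
  obtain N0 where N0: "\<forall>N\<ge>N0. sem N A \<subseteq> sem N (Dia (enat 0) A)" using sound[OF h0] by blast
  define N where "N = max N0 (maxi A)"
  have sub: "sem N A \<subseteq> dia N 0 (sem N A)" using N0 N_def by auto
  obtain w where w: "w \<in> sem N A" using nonempty[of A N] N_def by auto
  let ?T = "(\<lambda>w. w 0) ` sem N A"
  have "\<forall>y\<in>?T. nf y" using sem_W by (auto simp: W_def)
  then obtain m where m: "m \<in> ?T" "\<forall>y\<in>?T. \<not> olt y m"
    using ord_min[of "w 0" ?T] w by blast
  then obtain w0 where w0: "w0 \<in> sem N A" "m = w0 0" by blast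
  hence "w0 \<in> dia N 0 (sem N A)" using sub by blast
  then obtain v where "v \<in> sem N A" "olt (v 0) (w0 0)" by (auto simp: dia_def split: if_splits)
  hence "v 0 \<in> ?T" "olt (v 0) m" using w0 by auto
  then show False using m(2) by blast
qed

end
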